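(* In the configuration described in the context, suppose $R_1>R_2$ are positive integers. Then the three lengths $T_1T_2$, $C_1M$, $C_2M$ are all integers if and only if there exist positive integers $\delta, r_1, r_2, r_3$ with $\gcd(r_1,r_2)=1$ and $r_1^2+r_2^2=r_3^2$ such that $R_1=\delta r_1^2$ and $R_2=\delta r_2^2$ (necessarily $r_1>r_2$). In that case $T_1T_2 = 2\delta r_1r_2$, $IM=T_1M=T_2M=\delta r_1 r_2$, $C_1M=\delta r_1r_3$, $C_2M=\delta r_2 r_3$, and the lengths $T_1I = \frac{2\delta r_2r_1^2}{r_3}$, $T_2I=\frac{2\delta r_1r_2^2}{r_3}$, $C_1M_1=\frac{\delta r_1^3}{r_3}$, $C_2M_2=\frac{\delta r_2^3}{r_3}$, $M_1M = \frac{\delta r_1r_2^2}{r_3}$, $M_2M=\frac{\delta r_2r_1^2}{r_3}$, $C_2K=\frac{\delta r_2^2r_3^2}{r_1^2-r_2^2}$, $T_2K=\frac{2\delta r_2^3r_1}{r_1^2-r_2^2}$, $C_1K=\frac{\delta r_1^2r_3^2}{r_1^2-r_2^2}$, $T_1K=\frac{2\delta r_1^3r_2}{r_1^2-r_2^2}$ are rational.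
   Context: Configuration: two circles in the plane with centers $C_1,C_2$ and radii $R_1>R_2>0$, externally tangent at the point $I$ (so $I$ lies on segment $C_1C_2$ and $C_1C_2=R_1+R_2$). Let a common external tangent line touch the first circle at $T_1$ and the second circle at $T_2$ (both circles on the same side of line $T_1T_2$). Let $M$ be the midpoint of segment $T_1T_2$; equivalently, $M$ is the point where the common tangent line at $I$ (the line through $I$ perpendicular to $C_1C_2$) meets $T_1T_2$. Let $M_1$ be the midpoint of segment $T_1I$ (which is the intersection point of segment $C_1M$ with $T_1I$, the foot of the perpendicular from $C_1$ to $T_1I$), and $M_2$ the midpoint of segment $T_2I$ (the intersection of $C_2M$ with $T_2I$). Since $R_1>R_2$, the lines $T_1T_2$ and $C_1C_2$ meet at a point $K$, lying beyond $C_2$ on ray $C_1C_2$ and beyond $T_2$ on ray $T_1T_2$. For points $X,Y$, $XY$ denotes the length of segment $\overline{XY}$. *)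

theory Defs
  imports "HOL-Analysis.Analysis"
begin

end

theory Submission
  imports Defs "HOL-Computational_Algebra.Nth_Powers"
begin

lemma distP:
  fixes T w p :: "'a::real_inner"
  assumes "w \<bullet> p = 0"
  shows "dist (T + x *\<^sub>R w + y *\<^sub>R p) (T + x' *\<^sub>R w + y' *\<^sub>R p) = sqrt((x-x')^2 * (w\<bullet>w) + (y-y')^2*(p\<bullet>p))"
proof -
  have "T + x *\<^sub>R w + y *\<^sub>R p - (T + x' *\<^sub>R w + y' *\<^sub>R p) = (x-x') *\<^sub>R w + (y-y') *\<^sub>R p"
    by (simp add: algebra_simps)
  moreover have "norm ((x-x') *\<^sub>R w + (y-y') *\<^sub>R p) = sqrt((x-x')^2 * (w\<bullet>w) + (y-y')^2*(p\<bullet>p))"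
    unfolding norm_eq_sqrt_inner using assms
    by (simp add: inner_add_left inner_add_right inner_commute power2_eq_square algebra_simps)
  ultimately show ?thesis by (simp add: dist_norm)
qed

lemma sqrt_int_sq:
  fixes n :: nat assumes "sqrt (real n) \<in> \<int>" shows "\<exists>k. n = k^2"
proof -
  obtain z where z: "sqrt (real n) = of_int z" using assms Ints_cases by metis
  have "z \<ge> 0" using z by (metis of_int_0_le_iff real_sqrt_ge_zero of_nat_0_le_iff)
  have "real n = (of_int z)^2" using z by (metis of_nat_0_le_iff real_sqrt_pow2)
  hence "real n = real ((nat z)^2)" using \<open>z\<ge>0\<close> by simp
  thus ?thesis by (metis of_nat_eq_iff)
qed

lemma sq_dvd: fixes a b :: nat shows "a^2 dvd b^2 \<Longrightarrow> a dvd b"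
  by (simp add: pow_divides_pow_iff)

lemma NT:
  fixes R1 R2 k m :: nat
  assumes "R1 > 0" "R2 > 0" "4*R1*R2 = k^2" "R1*(R1+R2) = m^2"
  shows "\<exists>d r1 r2 r3 :: nat. 0 < d \<and> 0 < r1 \<and> 0 < r2 \<and> 0 < r3 \<and> coprime r1 r2 \<and>
              r1^2 + r2^2 = r3^2 \<and> R1 = d * r1^2 \<and> R2 = d * r2^2"
proof -
  define d where "d = gcd R1 R2"
  have d0: "d > 0" using assms d_def by simp
  define x where "x = R1 div d"
  define y where "y = R2 div d"
  have x: "R1 = d*x" unfolding x_def d_def by simp
  have y: "R2 = d*y" unfolding y_def d_def by simp
  have cxy: "coprime x y" unfolding x_def y_def d_def using assms by (intro div_gcd_coprime) simp
  have x0: "x > 0" "y > 0" using x y assms by auto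
  have "(2*d)^2 * (x*y) = k^2" using assms(3) x y by (simp add: power2_eq_square algebra_simps)
  hence "(2*d)^2 dvd k^2" by (metis dvd_triv_left)
  hence "2*d dvd k" by (rule sq_dvd)
  then obtain j where j: "k = 2*d*j" by blast
  have "(2*d)^2 * (x*y) = (2*d)^2 * j^2" using \<open>(2*d)^2 * (x*y) = k^2\<close> j by (simp add: power_mult_distrib)
  hence "x*y = j^2" using d0 by simp
  hence "is_nth_power 2 (x*y)" by (auto simp: is_nth_power_def)
  hence "is_nth_power 2 x" "is_nth_power 2 y" using is_nth_power_mult_coprime_natD[OF cxy _ x0] by auto
  then obtain r1 r2 where r1: "x = r1^2" and r2: "y = r2^2"
    by (auto simp: is_nth_power_def)
  have c12: "coprime r1 r2" using cxy r1 r2 by simp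
  have "(d*r1)^2 * (r1^2+r2^2) = m^2" using assms(4) x y r1 r2 by (simp add: power2_eq_square algebra_simps)
  hence "(d*r1)^2 dvd m^2" by (metis dvd_triv_left)
  hence "d*r1 dvd m" by (rule sq_dvd)
  then obtain r3 where r3: "m = d*r1*r3" by blast
  have pos: "d*r1 > 0" using d0 x0 r1 by simp
  have "(d*r1)^2 * (r1^2+r2^2) = (d*r1)^2 * r3^2" using \<open>(d*r1)^2 * (r1^2+r2^2) = m^2\<close> r3
    by (simp add: power_mult_distrib)
  hence e: "r1^2+r2^2 = r3^2" using pos by simp
  have "r1 > 0" "r2 > 0" using x0 r1 r2 by auto
  moreover have "r3 > 0" using e \<open>r1 > 0\<close> by (metis add_gr_0 zero_less_power zero_less_power2 power_0_left  gr0I zero_power2)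
  ultimately show ?thesis using d0 c12 e x y r1 r2 by blast
qed

theorem mainTheorem3:
  fixes C1 C2 I T1 T2 M M1 M2 K :: "real^2"
    and R1 R2 :: nat
  assumes R2pos: "0 < R2" and R12: "R2 < R1"
    and cen: "dist C1 C2 = real R1 + real R2"
    and I_seg: "I \<in> closed_segment C1 C2" and I_dist: "dist C1 I = real R1"
    and T1_on: "dist C1 T1 = real R1" and T2_on: "dist C2 T2 = real R2"
    and tan1: "(T2 - T1) \<bullet> (T1 - C1) = 0" and tan2: "(T2 - T1) \<bullet> (T2 - C2) = 0"
    and T12: "T1 \<noteq> T2"
    and same_side: "(C1 - T1) \<bullet> (C2 - T2) > 0"
    and M_def: "M = midpoint T1 T2"
    and M1_def: "M1 = midpoint T1 I" and M2_def: "M2 = midpoint T2 I"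
    and K_C: "K \<in> affine hull {C1, C2}" and K_T: "K \<in> affine hull {T1, T2}"
  shows "((dist T1 T2 \<in> \<int> \<and> dist C1 M \<in> \<int> \<and> dist C2 M \<in> \<int>) \<longleftrightarrow>
          (\<exists>d r1 r2 r3 :: nat. 0 < d \<and> 0 < r1 \<and> 0 < r2 \<and> 0 < r3 \<and> coprime r1 r2 \<and>
              r1^2 + r2^2 = r3^2 \<and> R1 = d * r1^2 \<and> R2 = d * r2^2))
     \<and> (\<forall>d r1 r2 r3 :: nat. 0 < d \<and> 0 < r1 \<and> 0 < r2 \<and> 0 < r3 \<and> coprime r1 r2 \<and>
              r1^2 + r2^2 = r3^2 \<and> R1 = d * r1^2 \<and> R2 = d * r2^2 \<longrightarrow>
          r2 < r1 \<and>
          dist T1 T2 = 2 * d * r1 * r2 \<and>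
          dist I M = d * r1 * r2 \<and> dist T1 M = d * r1 * r2 \<and> dist T2 M = d * r1 * r2 \<and>
          dist C1 M = d * r1 * r3 \<and> dist C2 M = d * r2 * r3 \<and>
          dist T1 I = 2 * d * r2 * r1^2 / r3 \<and> dist T2 I = 2 * d * r1 * r2^2 / r3 \<and>
          dist C1 M1 = d * r1^3 / r3 \<and> dist C2 M2 = d * r2^3 / r3 \<and>
          dist M1 M = d * r1 * r2^2 / r3 \<and> dist M2 M = d * r2 * r1^2 / r3 \<and>
          dist C2 K = d * r2^2 * r3^2 / (real r1^2 - real r2^2) \<and>
          dist T2 K = 2 * d * r2^3 * r1 / (real r1^2 - real r2^2) \<and>
          dist C1 K = d * r1^2 * r3^2 / (real r1^2 - real r2^2) \<and>
          dist T1 K = 2 * d * r1^3 * r2 / (real r1^2 - real r2^2) \<and>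
          dist T1 I \<in> \<rat> \<and> dist T2 I \<in> \<rat> \<and> dist C1 M1 \<in> \<rat> \<and> dist C2 M2 \<in> \<rat> \<and>
          dist M1 M \<in> \<rat> \<and> dist M2 M \<in> \<rat> \<and> dist C2 K \<in> \<rat> \<and> dist T2 K \<in> \<rat> \<and>
          dist C1 K \<in> \<rat> \<and> dist T1 K \<in> \<rat>)"
proof -
  define a where "a = real R1"
  define b where "b = real R2"
  have a0: "a > 0" and b0: "b > 0" and ab: "b < a" using R2pos R12 by (auto simp: a_def b_def)
  define p where "p = C1 - T1"
  define w where "w = T2 - T1"
  define q where "q = C2 - T2"
  define W where "W = w \<bullet> w"
  define c where "c = b / a"
  define P where "P x y = T1 + x *\<^sub>R w + y *\<^sub>R p" for x y
  have wp: "w \<bullet> p = 0"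
  proof -
    have "T1 - C1 = - p" by (simp add: p_def)
    thus ?thesis using tan1 by (simp add: w_def)
  qed
  have wq: "w \<bullet> q = 0"
  proof -
    have "T2 - C2 = - q" by (simp add: q_def)
    thus ?thesis using tan2 by (simp add: w_def)
  qed
  have pp: "p \<bullet> p = a^2" using T1_on by (metis dist_norm p_def power2_norm_eq_inner a_def)
  have qq: "q \<bullet> q = b^2" using T2_on by (metis dist_norm q_def power2_norm_eq_inner b_def)
  have pq0: "p \<bullet> q > 0" using same_side by (simp add: p_def q_def)
  have w0: "w$1 \<noteq> 0 \<or> w$2 \<noteq> 0" using T12 by (auto simp: w_def vec_eq_iff forall_2)
  have e1: "w$1*p$1 + w$2*p$2 = 0" using wp by (simp add: inner_vec_def sum_2)
  have e2: "w$1*q$1 + w$2*q$2 = 0" using wq by (simp add: inner_vec_def sum_2)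
  have c1: "w$1*(p$1*q$2 - p$2*q$1) = q$2*(w$1*p$1 + w$2*p$2) - p$2*(w$1*q$1+w$2*q$2)"
    by (simp add: algebra_simps)
  have c2: "w$2*(p$1*q$2 - p$2*q$1) = p$1*(w$1*q$1+w$2*q$2) - q$1*(w$1*p$1 + w$2*p$2)"
    by (simp add: algebra_simps)
  have cr: "p$1*q$2 - p$2*q$1 = 0" using c1 c2 e1 e2 w0 by auto
  have "(p \<bullet> q)^2 = (p \<bullet> p)*(q \<bullet> q) - (p$1*q$2 - p$2*q$1)^2"
    by (simp add: inner_vec_def sum_2 power2_eq_square algebra_simps)
  hence "(p \<bullet> q)^2 = (a*b)^2" using cr pp qq by (simp add: power_mult_distrib)
  hence pq: "p \<bullet> q = a*b" using pq0 a0 b0 by (simp add: power2_eq_iff_nonneg)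
  have "(q - c *\<^sub>R p) \<bullet> (q - c *\<^sub>R p) = q \<bullet> q - 2*c*(p \<bullet> q) + c^2 * (p \<bullet> p)"
    by (simp add: inner_diff_left inner_diff_right inner_commute power2_eq_square algebra_simps)
  also have "\<dots> = 0" using a0 by (simp add: qq pq pp c_def field_simps power2_eq_square)
  finally have qc: "q = c *\<^sub>R p" by simp
  have PT1: "T1 = P 0 0" by (simp add: P_def)
  have PT2: "T2 = P 1 0" by (simp add: P_def w_def)
  have PC1: "C1 = P 0 1" by (simp add: P_def p_def)
  have PC2: "C2 = P 1 c"
  proof -
    have "P 1 c = T1 + w + q" by (simp add: P_def qc)
    thus ?thesis by (simp add: w_def q_def)
  qed
  have distP': "dist (P x y) (P x' y') = sqrt((x-x')^2 * W + (y-y')^2 * a^2)" for x y x' y'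
    unfolding P_def W_def pp[symmetric] by (rule distP[OF wp])
  have W0: "W \<ge> 0" by (simp add: W_def)
  have "sqrt((0-1)^2 * W + (1-c)^2 * a^2) = a + b" using cen unfolding PC1 PC2 distP' a_def b_def by simp
  hence "W + (1-c)^2 * a^2 = (a+b)^2" using W0 by (metis power2_eq_square real_sqrt_pow2 add_nonneg_nonneg zero_le_power2 mult_nonneg_nonneg power_one mult_1 diff_0 power2_minus)
  moreover have "(1-c)^2 * a^2 = (a-b)^2" using a0 by (simp add: c_def field_simps power2_eq_square)
  ultimately have Wv: "W = 4*a*b" by (simp add: power2_eq_square algebra_simps)
  have Pp: "(P x y - T1) \<bullet> p = y * a^2" for x y
    by (simp add: P_def inner_add_left wp pp)
  obtain tt where v01: "0 \<le> tt" "tt \<le> 1" and Iv: "I = (1 - tt) *\<^sub>R C1 + tt *\<^sub>R C2"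
    using I_seg unfolding closed_segment_def by blast
  define yI where "yI = 1 - tt + tt * c"
  have PI: "I = P tt yI" unfolding Iv PC1 PC2 P_def yI_def by (simp add: algebra_simps)
  have "sqrt((0-tt)^2 * W + (1-yI)^2 * a^2) = a" using I_dist unfolding PC1 PI distP' a_def by simp
  moreover have "(0-tt)^2 * W + (1-yI)^2 * a^2 = (tt*(a+b))^2" unfolding Wv yI_def c_def using a0
    by (simp add: field_simps power2_eq_square)
  ultimately have "tt*(a+b) = a" using v01 a0 b0 by simp
  hence vv: "tt = a/(a+b)" using a0 b0 by (simp add: field_simps)
  have apb: "a + b \<noteq> 0" using a0 b0 by simp
  have "tt * c = b/(a+b)" unfolding vv c_def using a0 by simp
  hence "yI = 1 - a/(a+b) + b/(a+b)" unfolding yI_def vv by simp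
  also have "\<dots> = (a+b)/(a+b) - a/(a+b) + b/(a+b)" using apb by simp
  also have "\<dots> = ((a+b) - a + b)/(a+b)" by (simp only: diff_divide_distrib add_divide_distrib)
  also have "\<dots> = 2*b/(a+b)" by simp
  finally have yIv: "yI = 2*b/(a+b)" .
  have PM: "M = P (1/2) 0" unfolding M_def PT1 PT2 by (simp add: P_def midpoint_def vec_eq_iff field_simps)
  have PM1: "M1 = P (tt/2) (yI/2)" unfolding M1_def PT1 PI by (simp add: P_def midpoint_def vec_eq_iff field_simps)
  have PM2: "M2 = P ((1+tt)/2) (yI/2)" unfolding M2_def PT2 PI by (simp add: P_def midpoint_def vec_eq_iff field_simps)
  obtain al be where albe: "al + be = 1" and Kab: "K = al *\<^sub>R C1 + be *\<^sub>R C2"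
    using K_C unfolding affine_hull_2 by blast
  obtain ga de where gade: "ga + de = 1" and Kgd: "K = ga *\<^sub>R T1 + de *\<^sub>R T2"
    using K_T unfolding affine_hull_2 by blast
  have al1: "al = 1 - be" using albe by simp
  have ga1: "ga = 1 - de" using gade by simp
  have K1: "K = P be (al + be * c)" unfolding Kab PC1 PC2 P_def al1
    by (simp add: vec_eq_iff algebra_simps)
  have K2: "K = P de 0" unfolding Kgd ga1
    by (simp add: P_def w_def vec_eq_iff algebra_simps)
  have "(al + be * c) * a^2 = 0 * a^2" using Pp[of be "al+be * c"] Pp[of de 0] K1 K2 by simp
  hence "al + be * c = 0" using a0 by simp
  hence "be * (a - b) = a" using al1 a0 unfolding c_def by (simp add: field_simps)
  hence bev: "be = a/(a-b)" using ab by (simp add: field_simps)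
  have PK: "K = P be 0" using K1 \<open>al + be * c = 0\<close> by simp
  have EQ: "sqrt E = y" if "y^2 = E" "0 \<le> y" for E y using that by (rule real_sqrt_unique)
  have part2: "\<forall>d r1 r2 r3 :: nat. 0 < d \<and> 0 < r1 \<and> 0 < r2 \<and> 0 < r3 \<and> coprime r1 r2 \<and>
              r1^2 + r2^2 = r3^2 \<and> R1 = d * r1^2 \<and> R2 = d * r2^2 \<longrightarrow>
          r2 < r1 \<and>
          dist T1 T2 = 2 * d * r1 * r2 \<and>
          dist I M = d * r1 * r2 \<and> dist T1 M = d * r1 * r2 \<and> dist T2 M = d * r1 * r2 \<and>
          dist C1 M = d * r1 * r3 \<and> dist C2 M = d * r2 * r3 \<and>
          dist T1 I = 2 * d * r2 * r1^2 / r3 \<and> dist T2 I = 2 * d * r1 * r2^2 / r3 \<and>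
          dist C1 M1 = d * r1^3 / r3 \<and> dist C2 M2 = d * r2^3 / r3 \<and>
          dist M1 M = d * r1 * r2^2 / r3 \<and> dist M2 M = d * r2 * r1^2 / r3 \<and>
          dist C2 K = d * r2^2 * r3^2 / (real r1^2 - real r2^2) \<and>
          dist T2 K = 2 * d * r2^3 * r1 / (real r1^2 - real r2^2) \<and>
          dist C1 K = d * r1^2 * r3^2 / (real r1^2 - real r2^2) \<and>
          dist T1 K = 2 * d * r1^3 * r2 / (real r1^2 - real r2^2) \<and>
          dist T1 I \<in> \<rat> \<and> dist T2 I \<in> \<rat> \<and> dist C1 M1 \<in> \<rat> \<and> dist C2 M2 \<in> \<rat> \<and>
          dist M1 M \<in> \<rat> \<and> dist M2 M \<in> \<rat> \<and> dist C2 K \<in> \<rat> \<and> dist T2 K \<in> \<rat> \<and>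
          dist C1 K \<in> \<rat> \<and> dist T1 K \<in> \<rat>"
  proof (intro allI impI)
    fix d r1 r2 r3 :: nat
    assume H: "0 < d \<and> 0 < r1 \<and> 0 < r2 \<and> 0 < r3 \<and> coprime r1 r2 \<and>
              r1^2 + r2^2 = r3^2 \<and> R1 = d * r1^2 \<and> R2 = d * r2^2"
    define x1 where "x1 = real r1"
    define x2 where "x2 = real r2"
    define x3 where "x3 = real r3"
    define e where "e = real d"
    define D where "D = x1^2 - x2^2"
    have pos: "x1 > 0" "x2 > 0" "x3 > 0" "e > 0" using H by (auto simp: x1_def x2_def x3_def e_def)
    have h: "x1^2 + x2^2 = x3^2" using H unfolding x1_def x2_def x3_def by (metis of_nat_add of_nat_power)
    have ha: "a = e * x1^2" using H by (simp add: a_def e_def x1_def)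
    have hb: "b = e * x2^2" using H by (simp add: b_def e_def x2_def)
    have "r2^2 < r1^2" using H R12 by simp
    hence r21: "r2 < r1" by (rule power_less_imp_less_base) simp
    hence "x2 < x1" by (simp add: x1_def x2_def)
    hence "x2^2 < x1^2" using pos by (intro power_strict_mono) auto
    hence D0: "D > 0" by (simp add: D_def)
    have hsum: "a + b = e * x3^2" using h by (simp add: ha hb algebra_simps flip: h)
    have hdif: "a - b = e * D" by (simp add: ha hb D_def algebra_simps)
    have tv: "tt = x1^2 / x3^2" unfolding vv hsum unfolding ha using pos by simp
    have yv: "yI = 2 * x2^2 / x3^2" unfolding yIv hsum unfolding hb using pos by simp
    have cv: "c = x2^2 / x1^2" unfolding c_def ha hb using pos by simp
    have bv: "be = x1^2 / D" unfolding bev hdif unfolding ha using pos by simp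
    have Wv2: "W = 4 * (e*x1^2) * (e*x2^2)" unfolding Wv ha hb by simp
    note subs = tv yv cv bv Wv2 ha
    have hD: "D = x1^2 - x2^2" by (simp add: D_def)
    have d1: "dist T1 T2 = 2 * e * x1 * x2" unfolding PT1 PT2 distP' subs
      by (rule EQ, use pos D0 in \<open>simp add: field_simps power2_eq_square ; (use hD h in algebra | simp add: eval_nat_numeral)\<close>, use pos D0 in \<open>simp\<close>)
    have d2: "dist I M = e * x1 * x2" unfolding PI PM distP' subs
      by (rule EQ, use pos D0 in \<open>simp add: field_simps power2_eq_square ; (use hD h in algebra | simp add: eval_nat_numeral)\<close>, use pos D0 in \<open>simp\<close>)
    have d3: "dist T1 M = e * x1 * x2" unfolding PT1 PM distP' subs
      by (rule EQ, use pos D0 in \<open>simp add: field_simps power2_eq_square ; (use hD h in algebra | simp add: eval_nat_numeral)\<close>, use pos D0 in \<open>simp\<close>)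
    have d4: "dist T2 M = e * x1 * x2" unfolding PT2 PM distP' subs
      by (rule EQ, use pos D0 in \<open>simp add: field_simps power2_eq_square ; (use hD h in algebra | simp add: eval_nat_numeral)\<close>, use pos D0 in \<open>simp\<close>)
    have d5: "dist C1 M = e * x1 * x3" unfolding PC1 PM distP' subs
      by (rule EQ, use pos D0 in \<open>simp add: field_simps power2_eq_square ; (use hD h in algebra | simp add: eval_nat_numeral)\<close>, use pos D0 in \<open>simp\<close>)
    have d6: "dist C2 M = e * x2 * x3" unfolding PC2 PM distP' subs
      by (rule EQ, use pos D0 in \<open>simp add: field_simps power2_eq_square ; (use hD h in algebra | simp add: eval_nat_numeral)\<close>, use pos D0 in \<open>simp\<close>)
    have d7: "dist T1 I = 2 * e * x2 * x1^2 / x3" unfolding PT1 PI distP' subs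
      by (rule EQ, use pos D0 in \<open>simp add: field_simps power2_eq_square ; (use hD h in algebra | simp add: eval_nat_numeral)\<close>, use pos D0 in \<open>simp\<close>)
    have d8: "dist T2 I = 2 * e * x1 * x2^2 / x3" unfolding PT2 PI distP' subs
      by (rule EQ, use pos D0 in \<open>simp add: field_simps power2_eq_square ; (use hD h in algebra | simp add: eval_nat_numeral)\<close>, use pos D0 in \<open>simp\<close>)
    have d9: "dist C1 M1 = e * x1^3 / x3" unfolding PC1 PM1 distP' subs
      by (rule EQ, use pos D0 in \<open>simp add: field_simps power2_eq_square ; (use hD h in algebra | simp add: eval_nat_numeral)\<close>, use pos D0 in \<open>simp\<close>)
    have d10: "dist C2 M2 = e * x2^3 / x3" unfolding PC2 PM2 distP' subs
      by (rule EQ, use pos D0 in \<open>simp add: field_simps power2_eq_square ; (use hD h in algebra | simp add: eval_nat_numeral)\<close>, use pos D0 in \<open>simp\<close>)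
    have d11: "dist M1 M = e * x1 * x2^2 / x3" unfolding PM1 PM distP' subs
      by (rule EQ, use pos D0 in \<open>simp add: field_simps power2_eq_square ; (use hD h in algebra | simp add: eval_nat_numeral)\<close>, use pos D0 in \<open>simp\<close>)
    have d12: "dist M2 M = e * x2 * x1^2 / x3" unfolding PM2 PM distP' subs
      by (rule EQ, use pos D0 in \<open>simp add: field_simps power2_eq_square ; (use hD h in algebra | simp add: eval_nat_numeral)\<close>, use pos D0 in \<open>simp\<close>)
    have d13: "dist C2 K = e * x2^2 * x3^2 / D" unfolding PC2 PK distP' subs
      by (rule EQ, use pos D0 in \<open>simp add: field_simps power2_eq_square ; (use hD h in algebra | simp add: eval_nat_numeral)\<close>, use pos D0 in \<open>simp\<close>)
    have d14: "dist T2 K = 2 * e * x2^3 * x1 / D" unfolding PT2 PK distP' subs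
      by (rule EQ, use pos D0 in \<open>simp add: field_simps power2_eq_square ; (use hD h in algebra | simp add: eval_nat_numeral)\<close>, use pos D0 in \<open>simp\<close>)
    have d15: "dist C1 K = e * x1^2 * x3^2 / D" unfolding PC1 PK distP' subs
      by (rule EQ, use pos D0 in \<open>simp add: field_simps power2_eq_square ; (use hD h in algebra | simp add: eval_nat_numeral)\<close>, use pos D0 in \<open>simp\<close>)
    have d16: "dist T1 K = 2 * e * x1^3 * x2 / D" unfolding PT1 PK distP' subs
      by (rule EQ, use pos D0 in \<open>simp add: field_simps power2_eq_square ; (use hD h in algebra | simp add: eval_nat_numeral)\<close>, use pos D0 in \<open>simp\<close>)
    show "r2 < r1 \<and>
       dist T1 T2 = 2 * real d * real r1 * real r2 \<and>
       dist I M = real d * real r1 * real r2 \<and>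
       dist T1 M = real d * real r1 * real r2 \<and>
       dist T2 M = real d * real r1 * real r2 \<and>
       dist C1 M = real (d * r1 * r3) \<and>
       dist C2 M = real (d * r2 * r3) \<and>
       dist T1 I = 2 * real d * real r2 * (real r1)\<^sup>2 / real r3 \<and>
       dist T2 I = 2 * real d * real r1 * (real r2)\<^sup>2 / real r3 \<and>
       dist C1 M1 = real d * real r1 ^ 3 / real r3 \<and>
       dist C2 M2 = real d * real r2 ^ 3 / real r3 \<and>
       dist M1 M = real d * real r1 * (real r2)\<^sup>2 / real r3 \<and>
       dist M2 M = real d * real r2 * (real r1)\<^sup>2 / real r3 \<and>
       dist C2 K = real (d * r2\<^sup>2 * r3\<^sup>2) / ((real r1)\<^sup>2 - (real r2)\<^sup>2) \<and>
       dist T2 K =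
       2 * real d * real r2 ^ 3 * real r1 / ((real r1)\<^sup>2 - (real r2)\<^sup>2) \<and>
       dist C1 K = real (d * r1\<^sup>2 * r3\<^sup>2) / ((real r1)\<^sup>2 - (real r2)\<^sup>2) \<and>
       dist T1 K =
       2 * real d * real r1 ^ 3 * real r2 / ((real r1)\<^sup>2 - (real r2)\<^sup>2) \<and>
       dist T1 I \<in> \<rat> \<and>
       dist T2 I \<in> \<rat> \<and>
       dist C1 M1 \<in> \<rat> \<and>
       dist C2 M2 \<in> \<rat> \<and>
       dist M1 M \<in> \<rat> \<and>
       dist M2 M \<in> \<rat> \<and>
       dist C2 K \<in> \<rat> \<and> dist T2 K \<in> \<rat> \<and> dist C1 K \<in> \<rat> \<and> dist T1 K \<in> \<rat>"
      unfolding d1 d2 d3 d4 d5 d6 d7 d8 d9 d10 d11 d12 d13 d14 d15 d16 D_def x1_def x2_def x3_def e_def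
      using r21 by (simp add: Rats_mult Rats_divide Rats_diff Rats_power)
  qed
  have dT12: "dist T1 T2 = sqrt (real (4*R1*R2))" unfolding PT1 PT2 distP' Wv a_def b_def by simp
  have dC1M: "dist C1 M = sqrt (real (R1*(R1+R2)))" unfolding PC1 PM distP' Wv a_def b_def
    by (simp add: algebra_simps power2_eq_square)
  have iff: "(dist T1 T2 \<in> \<int> \<and> dist C1 M \<in> \<int> \<and> dist C2 M \<in> \<int>) \<longleftrightarrow>
          (\<exists>d r1 r2 r3 :: nat. 0 < d \<and> 0 < r1 \<and> 0 < r2 \<and> 0 < r3 \<and> coprime r1 r2 \<and>
              r1^2 + r2^2 = r3^2 \<and> R1 = d * r1^2 \<and> R2 = d * r2^2)"
  proof
    assume L: "dist T1 T2 \<in> \<int> \<and> dist C1 M \<in> \<int> \<and> dist C2 M \<in> \<int>"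
    obtain k where k: "4*R1*R2 = k^2" using sqrt_int_sq L dT12 by metis
    obtain m where m: "R1*(R1+R2) = m^2" using sqrt_int_sq L dC1M by metis
    show "\<exists>d r1 r2 r3 :: nat. 0 < d \<and> 0 < r1 \<and> 0 < r2 \<and> 0 < r3 \<and> coprime r1 r2 \<and>
              r1^2 + r2^2 = r3^2 \<and> R1 = d * r1^2 \<and> R2 = d * r2^2"
      using NT[OF _ R2pos k m] R12 by simp
  next
    assume "\<exists>d r1 r2 r3 :: nat. 0 < d \<and> 0 < r1 \<and> 0 < r2 \<and> 0 < r3 \<and> coprime r1 r2 \<and>
              r1^2 + r2^2 = r3^2 \<and> R1 = d * r1^2 \<and> R2 = d * r2^2"
    then obtain d r1 r2 r3 :: nat where Hs: "0 < d \<and> 0 < r1 \<and> 0 < r2 \<and> 0 < r3 \<and> coprime r1 r2 \<and>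
              r1^2 + r2^2 = r3^2 \<and> R1 = d * r1^2 \<and> R2 = d * r2^2" by blast
    have X: "dist T1 T2 = 2 * real d * real r1 * real r2" "dist C1 M = real (d * r1 * r3)"
      "dist C2 M = real (d * r2 * r3)" using part2 Hs by blast+
    show "dist T1 T2 \<in> \<int> \<and> dist C1 M \<in> \<int> \<and> dist C2 M \<in> \<int>"
      unfolding X by (metis Ints_of_nat of_nat_mult of_nat_numeral)
  qed
  show ?thesis using iff part2 by blast
qed

end
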